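(* Let $\mathcal{M}$ be a finite structure with unary predicates $A_u, A_v, A_w, \mathrm{FHalf}, \mathrm{SHalf}$ and a binary predicate $\mathrm{Mult}$ such that: the sets $A_u^{\mathcal{M}}, A_v^{\mathcal{M}}, A_w^{\mathcal{M}}$ are pairwise disjoint; $\mathrm{FHalf}^{\mathcal{M}}$ and $\mathrm{SHalf}^{\mathcal{M}}$ partition $M$ and $|\mathrm{FHalf}^{\mathcal{M}}|=\frac12|M|$; $A_u^{\mathcal{M}}\cup A_v^{\mathcal{M}}\subseteq\mathrm{FHalf}^{\mathcal{M}}$; $A_w^{\mathcal{M}}\subseteq\mathrm{SHalf}^{\mathcal{M}}$. Suppose $\mathcal{M}$ satisfies the conjunction of $$\forall y\,\big(A_w(y)\to\exists x\,\mathrm{Mult}(x,y)\big)\wedge\forall x\forall y\,\big(\mathrm{Mult}(x,y)\to(A_u(x)\wedge A_w(y))\big),$$ $$\forall x\,\big(A_u(x)\to\exists^{=50\%}y\,([\mathrm{SHalf}(y)\wedge\neg\mathrm{Mult}(x,y)]\vee A_v(y))\big),$$ $$\forall x\,\big(A_w(x)\to\exists^{=50\%}y\,([\mathrm{SHalf}(y)\wedge x\neq y]\vee\mathrm{Mult}(y,x))\big).$$ Then $|A_u^{\mathcal{M}}|\cdot|A_v^{\mathcal{M}}| = |A_w^{\mathcal{M}}|$.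
   Context: Structures are finite, over relational signatures with unary and binary relation symbols and equality. Global percentage quantifier: for a rational $0\le q\le 100$, $\mathcal{M}\models \exists^{=q\%}y\,\varphi(y)$ (possibly with other free variables fixed) iff the number of elements $b\in M$ with $\mathcal{M}\models\varphi(b)$ equals $\frac{q}{100}\cdot|M|$. *)

theory Defs
  imports Complex_Main
begin

definition pct_exists :: "'a set \<Rightarrow> rat \<Rightarrow> ('a \<Rightarrow> bool) \<Rightarrow> bool" where
  "pct_exists M q \<phi> \<longleftrightarrow> of_nat (card {b \<in> M. \<phi> b}) = (q / 100) * of_nat (card M)"

end

theory Submission
  imports Defs
begin

theorem mainTheorem4:
  fixes M :: "'a set"
    and Au Av Aw FHalf SHalf :: "'a set"
    and Mult :: "'a \<Rightarrow> 'a \<Rightarrow> bool"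
  assumes fin: "finite M"
    and sub: "Au \<subseteq> M" "Av \<subseteq> M" "Aw \<subseteq> M" "FHalf \<subseteq> M" "SHalf \<subseteq> M"
    and rel: "\<forall>x y. Mult x y \<longrightarrow> x \<in> M \<and> y \<in> M"
    and disj: "Au \<inter> Av = {}" "Au \<inter> Aw = {}" "Av \<inter> Aw = {}"
    and part: "FHalf \<union> SHalf = M" "FHalf \<inter> SHalf = {}"
    and half: "of_nat (card FHalf) = (1/2 :: rat) * of_nat (card M)"
    and uv: "Au \<union> Av \<subseteq> FHalf" and w: "Aw \<subseteq> SHalf"
    and ax1: "\<forall>y\<in>M. y \<in> Aw \<longrightarrow> (\<exists>x\<in>M. Mult x y)"
    and ax2: "\<forall>x\<in>M. \<forall>y\<in>M. Mult x y \<longrightarrow> (x \<in> Au \<and> y \<in> Aw)"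
    and ax3: "\<forall>x\<in>M. x \<in> Au \<longrightarrow>
               pct_exists M 50 (\<lambda>y. (y \<in> SHalf \<and> \<not> Mult x y) \<or> y \<in> Av)"
    and ax4: "\<forall>x\<in>M. x \<in> Aw \<longrightarrow>
               pct_exists M 50 (\<lambda>y. (y \<in> SHalf \<and> x \<noteq> y) \<or> Mult y x)"
  shows "card Au * card Av = card Aw"
proof -
  define R where "R x = {y\<in>M. Mult x y}" for x
  define L where "L y = {x\<in>M. Mult x y}" for y
  have finS: "finite SHalf" using fin sub finite_subset by blast
  have finF: "finite FHalf" using fin sub finite_subset by blast
  have cM: "card M = card FHalf + card SHalf"
    using part finS finF card_Un_disjoint by metis
  have cS: "of_nat (card SHalf) = (1/2::rat) * of_nat (card M)"
    using half cM by simp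
  have RS: "R x \<subseteq> SHalf" for x using ax2 rel w unfolding R_def by blast
  have LA: "L y \<subseteq> Au" for y using ax2 rel unfolding L_def by blast
  have finR: "finite (R x)" for x using fin unfolding R_def by simp
  have finL: "finite (L x)" for x using fin unfolding L_def by simp
  have finAv: "finite Av" using fin sub finite_subset by blast
  have finAu: "finite Au" using fin sub finite_subset by blast
  have finAw: "finite Aw" using fin sub finite_subset by blast
  have R1: "card (R x) = card Av" if x: "x \<in> Au" for x
  proof -
    have e: "{y\<in>M. (y\<in>SHalf \<and> \<not> Mult x y) \<or> y\<in>Av} = (SHalf - R x) \<union> Av"
      using sub unfolding R_def by blast
    have d: "(SHalf - R x) \<inter> Av = {}" using uv part by blast
    have "card ((SHalf - R x) \<union> Av) = card SHalf - card (R x) + card Av"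
      using card_Un_disjoint[OF _ finAv d] finS card_Diff_subset[OF finR RS] by simp
    moreover have "of_nat (card {y\<in>M. (y\<in>SHalf \<and> \<not> Mult x y) \<or> y\<in>Av}) = (of_nat (card SHalf)::rat)"
      using ax3 x sub cS unfolding pct_exists_def by auto
    ultimately have "card SHalf - card (R x) + card Av = card SHalf" using e by simp
    moreover have "card (R x) \<le> card SHalf" using card_mono[OF finS RS] .
    ultimately show ?thesis by linarith
  qed
  have L1: "card (L y) = 1" if y: "y \<in> Aw" for y
  proof -
    have e: "{x\<in>M. (x\<in>SHalf \<and> y \<noteq> x) \<or> Mult x y} = (SHalf - {y}) \<union> L y"
      using sub unfolding L_def by blast
    have d: "(SHalf - {y}) \<inter> L y = {}" using LA uv part by blast
    have yS: "y \<in> SHalf" using w y by blast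
    have "card ((SHalf - {y}) \<union> L y) = card SHalf - 1 + card (L y)"
      using card_Un_disjoint[OF _ finL d] finS yS by simp
    moreover have "of_nat (card {x\<in>M. (x\<in>SHalf \<and> y \<noteq> x) \<or> Mult x y}) = (of_nat (card SHalf)::rat)"
      using ax4 y sub cS unfolding pct_exists_def by auto
    ultimately have "card SHalf - 1 + card (L y) = card SHalf" using e by simp
    moreover have "card SHalf \<ge> 1" using yS finS card_0_eq[OF finS] by fastforce
    ultimately show ?thesis by linarith
  qed
  have P1: "{(x,y). Mult x y} = Sigma Au R"
    using ax2 rel unfolding R_def by auto
  have P2: "{(x,y). Mult x y} = (\<lambda>(y,x). (x,y)) ` Sigma Aw L"
  proof (intro set_eqI iffI)
    fix p assume "p \<in> {(x,y). Mult x y}"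
    then obtain a b where p: "p = (a,b)" "Mult a b" by auto
    hence "(b,a) \<in> Sigma Aw L" using ax2 rel unfolding L_def by auto
    thus "p \<in> (\<lambda>(y,x). (x,y)) ` Sigma Aw L" using p by force
  qed (auto simp: L_def)
  have "card {(x,y). Mult x y} = card Au * card Av"
    unfolding P1 using finAu finR R1 by simp
  moreover have "card {(x,y). Mult x y} = card Aw"
  proof -
    have "inj_on (\<lambda>(y,x). (x,y)) (Sigma Aw L)" by (auto simp: inj_on_def)
    hence "card {(x,y). Mult x y} = card (Sigma Aw L)" unfolding P2 by (rule card_image)
    also have "\<dots> = card Aw" using finAw finL L1 by simp
    finally show ?thesis .
  qed
  ultimately show ?thesis by simp
qed

end
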